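(* For every $\theta\in[0,\pi)$, $\min_{\mathcal A}\mathscr J^\theta_S=\ell\,\bar e_S$, the minimum is attained, and $(d_1,d_2,d_3)\in\mathcal A$ is a minimiser if and only if $$(d_1'\cdot d_3,\ d_2'\cdot d_3)=\frac k2\big(-1-\cos2\theta,\ \sin2\theta\big)\quad\text{a.e. in } I.$$
   Context: Fix constants $c_1>0$, $c_2>0$, $c:=c_1+c_2$, $k>0$, $\bar e_S\ge0$, $\theta\in[0,\pi)$, $\ell>0$, $I=(-\ell/2,\ell/2)$. Let $\bar A^\theta_S:=k\begin{pmatrix}-\cos^2\theta&\sin\theta\cos\theta\\ \sin\theta\cos\theta&-\sin^2\theta\end{pmatrix}$. For matrices $M\cdot N={\rm tr}(M^{\rm T}N)$, $|M|^2=M\cdot M$. For $M\in\mathbb{R}^{2\times2}_{\rm sym}$, $L^\theta_S(M):=-2c_1M\cdot\bar A^\theta_S+2c_2k\,{\rm tr}M+ck^2+\bar e_S$. $\overline Q^{\,\theta}_S(\alpha,\beta):=\min_{\gamma\in\mathbb{R}}\{c|M|^2+2c|\det M|+L^\theta_S(M): M=\begin{pmatrix}\alpha&\beta\\ \beta&\gamma\end{pmatrix}\}$. $\mathcal A:=\{(d_1,d_2,d_3): (d_1|d_2|d_3)\in W^{1,2}(I,{\rm SO}(3)),\ d_1'\cdot d_2=0 \text{ a.e. in } I\}$ and $\mathscr J^\theta_S(d_1,d_2,d_3):=\int_I\overline Q^{\,\theta}_S(d_1'\cdot d_3,d_2'\cdot d_3)\,dx_1$. *)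

theory Defs
  imports "HOL-Analysis.Analysis"
begin

definition intI :: "real \<Rightarrow> real set" where
  "intI l = {-l/2<..<l/2}"

definition smooth_fun :: "(real \<Rightarrow> real) \<Rightarrow> bool" where
  "smooth_fun \<phi> \<longleftrightarrow>
     (\<exists>D. D 0 = \<phi> \<and> (\<forall>n x. (D n has_real_derivative D (Suc n) x) (at x)))"

definition test_fun :: "real set \<Rightarrow> (real \<Rightarrow> real) \<Rightarrow> bool" where
  "test_fun U \<phi> \<longleftrightarrow> smooth_fun \<phi> \<and> compact (closure {x. \<phi> x \<noteq> 0})
      \<and> closure {x. \<phi> x \<noteq> 0} \<subseteq> U"

definition L2_on :: "real set \<Rightarrow> (real \<Rightarrow> 'a::euclidean_space) \<Rightarrow> bool" where
  "L2_on U f \<longleftrightarrow> set_borel_measurable lebesgue U f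
      \<and> set_integrable lebesgue U (\<lambda>x. (norm (f x))\<^sup>2)"

definition has_weak_deriv_on ::
  "real set \<Rightarrow> (real \<Rightarrow> 'a::euclidean_space) \<Rightarrow> (real \<Rightarrow> 'a) \<Rightarrow> bool" where
  "has_weak_deriv_on U u g \<longleftrightarrow>
     (\<forall>K. compact K \<and> K \<subseteq> U \<longrightarrow> set_integrable lebesgue K u \<and> set_integrable lebesgue K g)
     \<and> (\<forall>\<phi>. test_fun U \<phi> \<longrightarrow>
          (LINT x:U|lebesgue. deriv \<phi> x *\<^sub>R u x) = - (LINT x:U|lebesgue. \<phi> x *\<^sub>R g x))"

definition W12_with_deriv ::
  "real set \<Rightarrow> (real \<Rightarrow> 'a::euclidean_space) \<Rightarrow> (real \<Rightarrow> 'a) \<Rightarrow> bool" where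
  "W12_with_deriv U u g \<longleftrightarrow> L2_on U u \<and> L2_on U g \<and> has_weak_deriv_on U u g"

definition frame :: "real^3 \<Rightarrow> real^3 \<Rightarrow> real^3 \<Rightarrow> real^3^3" where
  "frame a b c = (\<chi> i j. if j = 1 then a $ i else if j = 2 then b $ i else c $ i)"

definition admissible ::
  "real \<Rightarrow> (real \<Rightarrow> real^3) \<Rightarrow> (real \<Rightarrow> real^3) \<Rightarrow> (real \<Rightarrow> real^3)
     \<Rightarrow> (real \<Rightarrow> real^3) \<Rightarrow> (real \<Rightarrow> real^3) \<Rightarrow> (real \<Rightarrow> real^3) \<Rightarrow> bool" where
  "admissible l d1 d2 d3 d1' d2' d3' \<longleftrightarrow>
     W12_with_deriv (intI l) d1 d1' \<and> W12_with_deriv (intI l) d2 d2'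
     \<and> W12_with_deriv (intI l) d3 d3'
     \<and> (AE x in lebesgue. x \<in> intI l \<longrightarrow> rotation_matrix (frame (d1 x) (d2 x) (d3 x)))
     \<and> (AE x in lebesgue. x \<in> intI l \<longrightarrow> d1' x \<bullet> d2 x = 0)"

definition frob :: "real^2^2 \<Rightarrow> real^2^2 \<Rightarrow> real" where
  "frob M N = trace (transpose M ** N)"

definition Abar :: "real \<Rightarrow> real \<Rightarrow> real^2^2" where
  "Abar k \<theta> = (\<chi> i j. if i = 1 \<and> j = 1 then - k * (cos \<theta>)\<^sup>2
                      else if i = 2 \<and> j = 2 then - k * (sin \<theta>)\<^sup>2
                      else k * sin \<theta> * cos \<theta>)"

definition LS :: "real \<Rightarrow> real \<Rightarrow> real \<Rightarrow> real \<Rightarrow> real \<Rightarrow> real^2^2 \<Rightarrow> real" where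
  "LS c1 c2 k eS \<theta> M =
     - 2 * c1 * frob M (Abar k \<theta>) + 2 * c2 * k * trace M + (c1 + c2) * k\<^sup>2 + eS"

definition symM :: "real \<Rightarrow> real \<Rightarrow> real \<Rightarrow> real^2^2" where
  "symM \<alpha> \<beta> \<gamma> = (\<chi> i j. if i = 1 \<and> j = 1 then \<alpha> else if i = 2 \<and> j = 2 then \<gamma> else \<beta>)"

text \<open>Qbar_S^theta(alpha,beta) = min over gamma (the infimum; it is attained).\<close>
definition Qbar :: "real \<Rightarrow> real \<Rightarrow> real \<Rightarrow> real \<Rightarrow> real \<Rightarrow> real \<Rightarrow> real \<Rightarrow> real" where
  "Qbar c1 c2 k eS \<theta> \<alpha> \<beta> =
     (INF \<gamma>\<in>UNIV. (let M = symM \<alpha> \<beta> \<gamma> in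
        (c1 + c2) * frob M M + 2 * (c1 + c2) * \<bar>det M\<bar> + LS c1 c2 k eS \<theta> M))"

definition JS :: "real \<Rightarrow> real \<Rightarrow> real \<Rightarrow> real \<Rightarrow> real \<Rightarrow> real
     \<Rightarrow> (real \<Rightarrow> real^3) \<Rightarrow> (real \<Rightarrow> real^3) \<Rightarrow> (real \<Rightarrow> real^3) \<Rightarrow> real" where
  "JS c1 c2 k eS \<theta> l d1' d2' d3 =
     (LINT x:intI l|lebesgue. Qbar c1 c2 k eS \<theta> (d1' x \<bullet> d3 x) (d2' x \<bullet> d3 x))"

end

theory Submission
  imports Defs
begin

definition G :: "real \<Rightarrow> real \<Rightarrow> real \<Rightarrow> real \<Rightarrow> real \<Rightarrow> real \<Rightarrow> real \<Rightarrow> real \<Rightarrow> real" where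
 "G c1 c2 k eS \<theta> \<alpha> \<beta> \<gamma> = (c1 + c2) * (\<alpha>\<^sup>2 + 2 * \<beta>\<^sup>2 + \<gamma>\<^sup>2) + 2 * (c1 + c2) * \<bar>\<alpha> * \<gamma> - \<beta>\<^sup>2\<bar>
   - 2 * c1 * k * (- \<alpha> * (cos \<theta>)\<^sup>2 + 2 * \<beta> * sin \<theta> * cos \<theta> - \<gamma> * (sin \<theta>)\<^sup>2) + 2 * c2 * k * (\<alpha> + \<gamma>) + (c1 + c2) * k\<^sup>2 + eS"

lemma G_eq: "(let M = symM \<alpha> \<beta> \<gamma> in
        (c1 + c2) * frob M M + 2 * (c1 + c2) * \<bar>det M\<bar> + LS c1 c2 k eS \<theta> M) = G c1 c2 k eS \<theta> \<alpha> \<beta> \<gamma>"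
  by (simp add: Let_def frob_def trace_def matrix_matrix_mult_def transpose_def symM_def Abar_def sum_2 det_2 LS_def G_def power2_eq_square algebra_simps)

lemma G_lb:
  assumes "c1 > 0" "c2 > 0"
  shows "G c1 c2 k eS \<theta> \<alpha> \<beta> \<gamma> \<ge> eS + c1 * ((\<alpha> + k * (cos \<theta>)\<^sup>2)\<^sup>2 + 2 * (\<beta> - k * sin \<theta> * cos \<theta>)\<^sup>2 + (\<gamma> + k * (sin \<theta>)\<^sup>2)\<^sup>2)"
proof -
  define A1 where "A1 = - k * (cos \<theta>)\<^sup>2"
  define A2 where "A2 = k * sin \<theta> * cos \<theta>"
  define A3 where "A3 = - k * (sin \<theta>)\<^sup>2"
  have kk: "A1\<^sup>2 + 2 * A2\<^sup>2 + A3\<^sup>2 = k\<^sup>2"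
  proof -
    have "A1\<^sup>2 + 2 * A2\<^sup>2 + A3\<^sup>2 = k\<^sup>2 * ((sin \<theta>)\<^sup>2 + (cos \<theta>)\<^sup>2)\<^sup>2"
      unfolding A1_def A2_def A3_def by algebra
    thus ?thesis by simp
  qed
  have id: "G c1 c2 k eS \<theta> \<alpha> \<beta> \<gamma> = eS + c1 * ((\<alpha> - A1)\<^sup>2 + 2 * (\<beta> - A2)\<^sup>2 + (\<gamma> - A3)\<^sup>2)
     + 2 * c1 * \<bar>\<alpha> * \<gamma> - \<beta>\<^sup>2\<bar>
     + c2 * ((\<alpha>\<^sup>2 + 2 * \<beta>\<^sup>2 + \<gamma>\<^sup>2) + 2 * \<bar>\<alpha> * \<gamma> - \<beta>\<^sup>2\<bar> + 2 * k * (\<alpha> + \<gamma>) + k\<^sup>2)"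
  proof -
    have "c1 * ((\<alpha> - A1)\<^sup>2 + 2 * (\<beta> - A2)\<^sup>2 + (\<gamma> - A3)\<^sup>2) = c1 * ((\<alpha>\<^sup>2 + 2 * \<beta>\<^sup>2 + \<gamma>\<^sup>2) - 2 * (\<alpha> * A1 + 2 * \<beta> * A2 + \<gamma> * A3) + (A1\<^sup>2 + 2 * A2\<^sup>2 + A3\<^sup>2))"
      by (simp add: power2_eq_square algebra_simps)
    also have "\<dots> = c1 * ((\<alpha>\<^sup>2 + 2 * \<beta>\<^sup>2 + \<gamma>\<^sup>2) - 2 * (\<alpha> * A1 + 2 * \<beta> * A2 + \<gamma> * A3) + k\<^sup>2)"
      using kk by simp
    finally show ?thesis unfolding G_def A1_def A2_def A3_def by (simp add: algebra_simps)
  qed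
  have c2p: "(\<alpha>\<^sup>2 + 2 * \<beta>\<^sup>2 + \<gamma>\<^sup>2) + 2 * \<bar>\<alpha> * \<gamma> - \<beta>\<^sup>2\<bar> + 2 * k * (\<alpha> + \<gamma>) + k\<^sup>2 \<ge> 0"
  proof -
    have "(\<alpha>\<^sup>2 + 2 * \<beta>\<^sup>2 + \<gamma>\<^sup>2) + 2 * \<bar>\<alpha> * \<gamma> - \<beta>\<^sup>2\<bar> + 2 * k * (\<alpha> + \<gamma>) + k\<^sup>2
       \<ge> (\<alpha>\<^sup>2 + 2 * \<beta>\<^sup>2 + \<gamma>\<^sup>2) + 2 * (\<alpha> * \<gamma> - \<beta>\<^sup>2) + 2 * k * (\<alpha> + \<gamma>) + k\<^sup>2"
      using abs_ge_self[of "\<alpha> * \<gamma> - \<beta>\<^sup>2"] by smt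
    moreover have "(\<alpha>\<^sup>2 + 2 * \<beta>\<^sup>2 + \<gamma>\<^sup>2) + 2 * (\<alpha> * \<gamma> - \<beta>\<^sup>2) + 2 * k * (\<alpha> + \<gamma>) + k\<^sup>2 = (\<alpha> + \<gamma> + k)\<^sup>2"
      by (simp add: power2_eq_square algebra_simps)
    ultimately show ?thesis by (metis zero_le_power2 order_trans)
  qed
  have "c2 * ((\<alpha>\<^sup>2 + 2 * \<beta>\<^sup>2 + \<gamma>\<^sup>2) + 2 * \<bar>\<alpha> * \<gamma> - \<beta>\<^sup>2\<bar> + 2 * k * (\<alpha> + \<gamma>) + k\<^sup>2) \<ge> 0"
    using c2p assms by simp
  moreover have "2 * c1 * \<bar>\<alpha> * \<gamma> - \<beta>\<^sup>2\<bar> \<ge> 0" using assms by simp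
  ultimately show ?thesis unfolding id A1_def A2_def A3_def by simp
qed

lemma G_min: "G c1 c2 k eS \<theta> (- k * (cos \<theta>)\<^sup>2) (k * sin \<theta> * cos \<theta>) (- k * (sin \<theta>)\<^sup>2) = eS"
proof -
  have s: "(sin \<theta>)\<^sup>2 + (cos \<theta>)\<^sup>2 = 1" by simp
  have d: "- k * (cos \<theta>)\<^sup>2 * (- k * (sin \<theta>)\<^sup>2) - (k * sin \<theta> * cos \<theta>)\<^sup>2 = 0" by algebra
  have "(c1 + c2) * ((- k * (cos \<theta>)\<^sup>2)\<^sup>2 + 2 * (k * sin \<theta> * cos \<theta>)\<^sup>2 + (- k * (sin \<theta>)\<^sup>2)\<^sup>2)
   - 2 * c1 * k * (- (- k * (cos \<theta>)\<^sup>2) * (cos \<theta>)\<^sup>2 + 2 * (k * sin \<theta> * cos \<theta>) * sin \<theta> * cos \<theta> - (- k * (sin \<theta>)\<^sup>2) * (sin \<theta>)\<^sup>2) + 2 * c2 * k * ((- k * (cos \<theta>)\<^sup>2) + (- k * (sin \<theta>)\<^sup>2)) + (c1 + c2) * k\<^sup>2 = 0"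
    using s by algebra
  then show ?thesis unfolding G_def d by simp
qed

lemma Qbar_G: "Qbar c1 c2 k eS \<theta> \<alpha> \<beta> = (INF \<gamma>. G c1 c2 k eS \<theta> \<alpha> \<beta> \<gamma>)"
  unfolding Qbar_def G_eq by simp

lemma G_lb0:
  assumes "c1 > 0" "c2 > 0"
  shows "G c1 c2 k eS \<theta> \<alpha> \<beta> \<gamma> \<ge> eS + c1 * ((\<alpha> + k * (cos \<theta>)\<^sup>2)\<^sup>2 + 2 * (\<beta> - k * sin \<theta> * cos \<theta>)\<^sup>2)"
proof -
  have "c1 * ((\<alpha> + k * (cos \<theta>)\<^sup>2)\<^sup>2 + 2 * (\<beta> - k * sin \<theta> * cos \<theta>)\<^sup>2) \<le>
        c1 * ((\<alpha> + k * (cos \<theta>)\<^sup>2)\<^sup>2 + 2 * (\<beta> - k * sin \<theta> * cos \<theta>)\<^sup>2 + (\<gamma> + k * (sin \<theta>)\<^sup>2)\<^sup>2)"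
    using assms by (intro mult_left_mono) auto
  then show ?thesis using G_lb[OF assms, where k=k and eS=eS and \<theta>=\<theta> and \<alpha>=\<alpha> and \<beta>=\<beta> and \<gamma>=\<gamma>] by linarith
qed

lemma G_bdd:
  assumes "c1 > 0" "c2 > 0"
  shows "bdd_below ((\<lambda>\<gamma>. G c1 c2 k eS \<theta> \<alpha> \<beta> \<gamma>) ` A)"
proof (rule bdd_belowI2)
  fix \<gamma> show "eS \<le> G c1 c2 k eS \<theta> \<alpha> \<beta> \<gamma>"
  proof -
    have "0 \<le> c1 * ((\<alpha> + k * (cos \<theta>)\<^sup>2)\<^sup>2 + 2 * (\<beta> - k * sin \<theta> * cos \<theta>)\<^sup>2)"
      using assms by simp
    then show ?thesis using G_lb0[OF assms, where k=k and eS=eS and \<theta>=\<theta> and \<alpha>=\<alpha> and \<beta>=\<beta> and \<gamma>=\<gamma>] by linarith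
  qed
qed

lemma Qbar_lb:
  assumes "c1 > 0" "c2 > 0"
  shows "Qbar c1 c2 k eS \<theta> \<alpha> \<beta> \<ge> eS + c1 * ((\<alpha> + k * (cos \<theta>)\<^sup>2)\<^sup>2 + 2 * (\<beta> - k * sin \<theta> * cos \<theta>)\<^sup>2)"
  unfolding Qbar_G by (rule cINF_greatest) (auto intro: G_lb0[OF assms])

lemma Qbar_le:
  assumes "c1 > 0" "c2 > 0"
  shows "Qbar c1 c2 k eS \<theta> \<alpha> \<beta> \<le> G c1 c2 k eS \<theta> \<alpha> \<beta> \<gamma>"
  unfolding Qbar_G by (rule cINF_lower[OF G_bdd[OF assms]]) auto

lemma G_cont: "continuous_on UNIV (\<lambda>\<gamma>. G c1 c2 k eS \<theta> \<alpha> \<beta> \<gamma>)"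
  unfolding G_def by (intro continuous_intros)

lemma Qbar_rat:
  assumes "c1 > 0" "c2 > 0"
  shows "Qbar c1 c2 k eS \<theta> \<alpha> \<beta> = (INF q\<in>\<rat>. G c1 c2 k eS \<theta> \<alpha> \<beta> q)"
proof (rule antisym)
  let ?m = "INF q\<in>\<rat>. G c1 c2 k eS \<theta> \<alpha> \<beta> q"
  have cl: "closed {\<gamma>. ?m \<le> G c1 c2 k eS \<theta> \<alpha> \<beta> \<gamma>}"
    by (intro closed_Collect_le continuous_intros G_cont)
  have "\<rat> \<subseteq> {\<gamma>. ?m \<le> G c1 c2 k eS \<theta> \<alpha> \<beta> \<gamma>}"
    using cINF_lower[OF G_bdd[OF assms]] by blast
  then have "closure \<rat> \<subseteq> {\<gamma>. ?m \<le> G c1 c2 k eS \<theta> \<alpha> \<beta> \<gamma>}"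
    using cl closure_minimal by blast
  then have all: "\<And>\<gamma>. ?m \<le> G c1 c2 k eS \<theta> \<alpha> \<beta> \<gamma>" using Rats_closure_real by auto
  show "Qbar c1 c2 k eS \<theta> \<alpha> \<beta> \<ge> ?m"
    unfolding Qbar_G by (rule cINF_greatest) (auto intro: all)
  show "Qbar c1 c2 k eS \<theta> \<alpha> \<beta> \<le> ?m"
  proof (rule cINF_greatest)
    show "\<rat> \<noteq> {}" using Rats_0 by blast
    fix q show "Qbar c1 c2 k eS \<theta> \<alpha> \<beta> \<le> G c1 c2 k eS \<theta> \<alpha> \<beta> q" by (rule Qbar_le[OF assms])
  qed
qed

lemma Qbar_meas:
  assumes "c1 > 0" "c2 > 0"
    and [measurable]: "a \<in> borel_measurable M" "b \<in> borel_measurable M"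
  shows "(\<lambda>x. Qbar c1 c2 k eS \<theta> (a x) (b x)) \<in> borel_measurable M"
  unfolding Qbar_rat[OF assms(1,2)]
proof (rule borel_measurable_cINF_real)
  show "countable \<rat>" by (rule countable_rat)
  fix q show "(\<lambda>x. G c1 c2 k eS \<theta> (a x) (b x) q) \<in> borel_measurable M"
    unfolding G_def by measurable
qed

lemma rot_norm3: assumes "rotation_matrix (frame a b c)" shows "norm c = 1"
proof -
  have "(transpose (frame a b c) ** frame a b c) $ 3 $ 3 = (mat 1 :: real^3^3) $ 3 $ 3"
    using assms unfolding rotation_matrix_def orthogonal_matrix_def by simp
  then have "c \<bullet> c = 1"
    by (simp add: matrix_matrix_mult_def transpose_def frame_def mat_def sum_3 inner_vec_def)
  then show ?thesis by (simp add: norm_eq_sqrt_inner)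
qed

lemma measI: "measure lebesgue (intI l) = l" "emeasure lebesgue (intI l) \<noteq> \<infinity>" "intI l \<in> sets lebesgue"
  if "l > 0" for l :: real
  using that by (auto simp: intI_def measure_def)

lemma abs_le_sq: "\<bar>x::real\<bar> \<le> 1 + x\<^sup>2"
proof -
  have "0 \<le> (\<bar>x\<bar> - 1)\<^sup>2" by simp
  then have "2 * \<bar>x\<bar> \<le> 1 + x\<^sup>2" by (simp add: power2_eq_square algebra_simps)
  then show ?thesis by simp
qed

lemma Qbar_ub:
  assumes "c1 > 0" "c2 > 0" "k > 0" "eS \<ge> 0"
  shows "\<bar>Qbar c1 c2 k eS \<theta> \<alpha> \<beta>\<bar> \<le> (4 * (c1 + c2) + 8 * (c1 + c2) * k + (c1 + c2) * k\<^sup>2 + eS) * (1 + \<alpha>\<^sup>2 + \<beta>\<^sup>2)"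
proof -
  define K where "K = c1 + c2"
  have K: "K > 0" "c1 \<le> K" "c2 \<le> K" using assms unfolding K_def by auto
  have q0: "Qbar c1 c2 k eS \<theta> \<alpha> \<beta> \<ge> 0"
    using Qbar_lb[OF assms(1,2), where k=k and eS=eS and \<theta>=\<theta> and \<alpha>=\<alpha> and \<beta>=\<beta>] assms
    by (smt (z3) mult_nonneg_nonneg zero_le_power2)
  have q1: "Qbar c1 c2 k eS \<theta> \<alpha> \<beta> \<le> G c1 c2 k eS \<theta> \<alpha> \<beta> 0" by (rule Qbar_le[OF assms(1,2)])
  have t1: "\<alpha> * (cos \<theta>)\<^sup>2 \<le> \<bar>\<alpha>\<bar>"
  proof -
    have "\<alpha> * (cos \<theta>)\<^sup>2 \<le> \<bar>\<alpha>\<bar> * (cos \<theta>)\<^sup>2" by (simp add: mult_right_mono)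
    also have "\<dots> \<le> \<bar>\<alpha>\<bar> * 1" by (intro mult_left_mono) (auto simp: cos_squared_eq)
    finally show ?thesis by simp
  qed
  have t2: "- (\<beta> * sin \<theta> * cos \<theta>) \<le> \<bar>\<beta>\<bar>"
  proof -
    have "\<bar>\<beta> * sin \<theta> * cos \<theta>\<bar> = \<bar>\<beta>\<bar> * (\<bar>sin \<theta>\<bar> * \<bar>cos \<theta>\<bar>)" by (simp add: abs_mult)
    also have "\<dots> \<le> \<bar>\<beta>\<bar> * 1" by (intro mult_left_mono mult_le_one) auto
    finally show ?thesis by linarith
  qed
  have G0: "G c1 c2 k eS \<theta> \<alpha> \<beta> 0 = K * (\<alpha>\<^sup>2 + 2 * \<beta>\<^sup>2) + 2 * K * \<beta>\<^sup>2
      + 2 * c1 * k * (\<alpha> * (cos \<theta>)\<^sup>2) + 4 * c1 * k * (- (\<beta> * sin \<theta> * cos \<theta>)) + 2 * c2 * k * \<alpha> + K * k\<^sup>2 + eS"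
    unfolding G_def K_def by (simp add: algebra_simps)
  have a1: "2 * c1 * k * (\<alpha> * (cos \<theta>)\<^sup>2) \<le> 2 * K * k * (1 + \<alpha>\<^sup>2)"
  proof -
    have "2 * c1 * k * (\<alpha> * (cos \<theta>)\<^sup>2) \<le> 2 * c1 * k * \<bar>\<alpha>\<bar>" using t1 assms by (intro mult_left_mono) auto
    also have "\<dots> \<le> 2 * K * k * (1 + \<alpha>\<^sup>2)" using K assms abs_le_sq[of \<alpha>]
      by (intro mult_mono) auto
    finally show ?thesis .
  qed
  have a2: "4 * c1 * k * (- (\<beta> * sin \<theta> * cos \<theta>)) \<le> 4 * K * k * (1 + \<beta>\<^sup>2)"
  proof -
    have "4 * c1 * k * (- (\<beta> * sin \<theta> * cos \<theta>)) \<le> 4 * c1 * k * \<bar>\<beta>\<bar>" using t2 assms by (intro mult_left_mono) auto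
    also have "\<dots> \<le> 4 * K * k * (1 + \<beta>\<^sup>2)" using K assms abs_le_sq[of \<beta>]
      by (intro mult_mono) auto
    finally show ?thesis .
  qed
  have a3: "2 * c2 * k * \<alpha> \<le> 2 * K * k * (1 + \<alpha>\<^sup>2)"
  proof -
    have "2 * c2 * k * \<alpha> \<le> 2 * c2 * k * \<bar>\<alpha>\<bar>" using assms by (intro mult_left_mono) auto
    also have "\<dots> \<le> 2 * K * k * (1 + \<alpha>\<^sup>2)" using K assms abs_le_sq[of \<alpha>]
      by (intro mult_mono) auto
    finally show ?thesis .
  qed
  have "G c1 c2 k eS \<theta> \<alpha> \<beta> 0 \<le> 4 * K * (\<alpha>\<^sup>2 + \<beta>\<^sup>2) + 4 * K * k * (1 + \<alpha>\<^sup>2) + 4 * K * k * (1 + \<beta>\<^sup>2) + K * k\<^sup>2 + eS"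
  proof -
    have e1: "K * (\<alpha>\<^sup>2 + 2 * \<beta>\<^sup>2) + 2 * K * \<beta>\<^sup>2 = K * \<alpha>\<^sup>2 + 4 * (K * \<beta>\<^sup>2)" by (simp add: algebra_simps)
    have e2: "4 * K * (\<alpha>\<^sup>2 + \<beta>\<^sup>2) = 4 * (K * \<alpha>\<^sup>2) + 4 * (K * \<beta>\<^sup>2)" by (simp add: algebra_simps)
    have e3: "4 * K * k * (1 + \<alpha>\<^sup>2) = 2 * K * k * (1 + \<alpha>\<^sup>2) + 2 * K * k * (1 + \<alpha>\<^sup>2)" by simp
    have Ka: "0 \<le> K * \<alpha>\<^sup>2" using K by simp
    show ?thesis unfolding G0 e2 using a1 a2 a3 e1 e3 Ka by linarith
  qed
  also have "\<dots> \<le> (4 * K + 8 * K * k + K * k\<^sup>2 + eS) * (1 + \<alpha>\<^sup>2 + \<beta>\<^sup>2)"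
  proof -
    have d: "(4 * K + 8 * K * k + K * k\<^sup>2 + eS) * (1 + \<alpha>\<^sup>2 + \<beta>\<^sup>2) - (4 * K * (\<alpha>\<^sup>2 + \<beta>\<^sup>2) + 4 * K * k * (1 + \<alpha>\<^sup>2) + 4 * K * k * (1 + \<beta>\<^sup>2) + K * k\<^sup>2 + eS)
       = 4 * K + (4 * K * k + K * k\<^sup>2 + eS) * \<alpha>\<^sup>2 + (4 * K * k + K * k\<^sup>2 + eS) * \<beta>\<^sup>2"
      by (simp add: algebra_simps)
    have p: "0 \<le> 4 * K * k + K * k\<^sup>2 + eS" using K assms by simp
    have "0 \<le> (4 * K * k + K * k\<^sup>2 + eS) * \<alpha>\<^sup>2" "0 \<le> (4 * K * k + K * k\<^sup>2 + eS) * \<beta>\<^sup>2"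
      using p by simp_all
    then show ?thesis using d K by linarith
  qed
  finally show ?thesis using q0 q1 unfolding K_def by simp
qed

lemma Qbar_char:
  assumes "c1 > 0" "c2 > 0"
  shows "Qbar c1 c2 k eS \<theta> \<alpha> \<beta> = eS \<longleftrightarrow> \<alpha> = k / 2 * (- 1 - cos (2 * \<theta>)) \<and> \<beta> = k / 2 * sin (2 * \<theta>)"
proof -
  have e1: "k / 2 * (- 1 - cos (2 * \<theta>)) = - k * (cos \<theta>)\<^sup>2" by (subst cos_double_cos) (simp add: algebra_simps)
  have e2: "k / 2 * sin (2 * \<theta>) = k * sin \<theta> * cos \<theta>" by (simp add: sin_double)
  show ?thesis unfolding e1 e2
  proof
    assume q: "Qbar c1 c2 k eS \<theta> \<alpha> \<beta> = eS"
    have "c1 * ((\<alpha> + k * (cos \<theta>)\<^sup>2)\<^sup>2 + 2 * (\<beta> - k * sin \<theta> * cos \<theta>)\<^sup>2) \<le> 0"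
      using Qbar_lb[OF assms, where k=k and eS=eS and \<theta>=\<theta> and \<alpha>=\<alpha> and \<beta>=\<beta>] q by linarith
    then have "(\<alpha> + k * (cos \<theta>)\<^sup>2)\<^sup>2 + 2 * (\<beta> - k * sin \<theta> * cos \<theta>)\<^sup>2 \<le> 0"
      using assms by (simp add: mult_le_0_iff)
    then have "(\<alpha> + k * (cos \<theta>)\<^sup>2)\<^sup>2 = 0" "(\<beta> - k * sin \<theta> * cos \<theta>)\<^sup>2 = 0"
      using zero_le_power2[of "\<alpha> + k * (cos \<theta>)\<^sup>2"] zero_le_power2[of "\<beta> - k * sin \<theta> * cos \<theta>"] by linarith+
    then show "\<alpha> = - k * (cos \<theta>)\<^sup>2 \<and> \<beta> = k * sin \<theta> * cos \<theta>" by simp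
  next
    assume h: "\<alpha> = - k * (cos \<theta>)\<^sup>2 \<and> \<beta> = k * sin \<theta> * cos \<theta>"
    have "Qbar c1 c2 k eS \<theta> \<alpha> \<beta> \<le> eS"
      using Qbar_le[OF assms, where \<gamma>="- k * (sin \<theta>)\<^sup>2"] h G_min by metis
    moreover have "Qbar c1 c2 k eS \<theta> \<alpha> \<beta> \<ge> eS"
      using Qbar_lb[OF assms, where k=k and eS=eS and \<theta>=\<theta> and \<alpha>=\<alpha> and \<beta>=\<beta>] h by simp
    ultimately show "Qbar c1 c2 k eS \<theta> \<alpha> \<beta> = eS" by simp
  qed
qed

lemma set_int_const: "set_integrable lebesgue (intI l) (\<lambda>x. C::real)" if "l > 0" for l
  using measI[OF that] unfolding set_integrable_def
  by (intro integrable_scaleR_left integrable_real_indicator) (auto simp: less_top)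

lemma Qbar_integrable:
  assumes c: "c1 > 0" "c2 > 0" "k > 0" "eS \<ge> 0" and l: "l > 0"
    and adm: "admissible l d1 d2 d3 d1' d2' d3'"
  shows "set_integrable lebesgue (intI l) (\<lambda>x. Qbar c1 c2 k eS \<theta> (d1' x \<bullet> d3 x) (d2' x \<bullet> d3 x))"
proof -
  define I where "I = intI l"
  have Is: "I \<in> sets lebesgue" using measI[OF l] I_def by simp
  have L1: "L2_on I d1'" and L2: "L2_on I d2'" and L3: "L2_on I d3"
    using adm unfolding admissible_def W12_with_deriv_def I_def by auto
  have rot: "AE x in lebesgue. x \<in> I \<longrightarrow> norm (d3 x) = 1"
    using adm unfolding admissible_def I_def by (auto elim!: eventually_mono intro: rot_norm3)
  have m1[measurable]: "(\<lambda>x. indicator I x *\<^sub>R d1' x) \<in> borel_measurable lebesgue"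
    using L1 unfolding L2_on_def set_borel_measurable_def by simp
  have m2[measurable]: "(\<lambda>x. indicator I x *\<^sub>R d2' x) \<in> borel_measurable lebesgue"
    using L2 unfolding L2_on_def set_borel_measurable_def by simp
  have m3[measurable]: "(\<lambda>x. indicator I x *\<^sub>R d3 x) \<in> borel_measurable lebesgue"
    using L3 unfolding L2_on_def set_borel_measurable_def by simp
  define C where "C = 4 * (c1 + c2) + 8 * (c1 + c2) * k + (c1 + c2) * k\<^sup>2 + eS"
  have C0: "C \<ge> 0" using c unfolding C_def by simp
  have meas: "set_borel_measurable lebesgue I (\<lambda>x. Qbar c1 c2 k eS \<theta> (d1' x \<bullet> d3 x) (d2' x \<bullet> d3 x))"
  proof -
    have eq: "(\<lambda>x. indicator I x *\<^sub>R Qbar c1 c2 k eS \<theta> (d1' x \<bullet> d3 x) (d2' x \<bullet> d3 x))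
      = (\<lambda>x. indicator I x * Qbar c1 c2 k eS \<theta> ((indicator I x *\<^sub>R d1' x) \<bullet> (indicator I x *\<^sub>R d3 x))
            ((indicator I x *\<^sub>R d2' x) \<bullet> (indicator I x *\<^sub>R d3 x)))"
      by (auto simp: fun_eq_iff indicator_def)
    have "(\<lambda>x. Qbar c1 c2 k eS \<theta> ((indicator I x *\<^sub>R d1' x) \<bullet> (indicator I x *\<^sub>R d3 x))
            ((indicator I x *\<^sub>R d2' x) \<bullet> (indicator I x *\<^sub>R d3 x))) \<in> borel_measurable lebesgue"
      by (rule Qbar_meas[OF c(1,2)]) measurable
    then show ?thesis unfolding set_borel_measurable_def eq using Is by measurable
  qed
  have bint: "set_integrable lebesgue I (\<lambda>x. C + C * (norm (d1' x))\<^sup>2 + C * (norm (d2' x))\<^sup>2)"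
    using L1 L2 set_int_const[OF l] unfolding L2_on_def I_def by (intro set_integral_add set_integrable_mult_right) auto
  show ?thesis unfolding I_def[symmetric]
  proof (rule set_integrable_bound[OF bint meas])
    show "AE x in lebesgue. x \<in> I \<longrightarrow> norm (Qbar c1 c2 k eS \<theta> (d1' x \<bullet> d3 x) (d2' x \<bullet> d3 x))
        \<le> norm (C + C * (norm (d1' x))\<^sup>2 + C * (norm (d2' x))\<^sup>2)"
      using rot
    proof eventually_elim
      case (elim x)
      show ?case
      proof
        assume "x \<in> I"
        then have n: "norm (d3 x) = 1" using elim by simp
        have a: "(d1' x \<bullet> d3 x)\<^sup>2 \<le> (norm (d1' x))\<^sup>2"
        proof -
          have "\<bar>d1' x \<bullet> d3 x\<bar> \<le> norm (d1' x)" using Cauchy_Schwarz_ineq2[of "d1' x" "d3 x"] n by simp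
          then show ?thesis using abs_le_square_iff[of "d1' x \<bullet> d3 x" "norm (d1' x)"] by simp
        qed
        have b: "(d2' x \<bullet> d3 x)\<^sup>2 \<le> (norm (d2' x))\<^sup>2"
        proof -
          have "\<bar>d2' x \<bullet> d3 x\<bar> \<le> norm (d2' x)" using Cauchy_Schwarz_ineq2[of "d2' x" "d3 x"] n by simp
          then show ?thesis using abs_le_square_iff[of "d2' x \<bullet> d3 x" "norm (d2' x)"] by simp
        qed
        have "\<bar>Qbar c1 c2 k eS \<theta> (d1' x \<bullet> d3 x) (d2' x \<bullet> d3 x)\<bar> \<le> C * (1 + (d1' x \<bullet> d3 x)\<^sup>2 + (d2' x \<bullet> d3 x)\<^sup>2)"
          unfolding C_def by (rule Qbar_ub[OF c])
        also have "\<dots> \<le> C * (1 + (norm (d1' x))\<^sup>2 + (norm (d2' x))\<^sup>2)"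
          using a b C0 by (intro mult_left_mono) auto
        also have "\<dots> = norm (C + C * (norm (d1' x))\<^sup>2 + C * (norm (d2' x))\<^sup>2)"
          using C0 by (simp add: algebra_simps)
        finally show "norm (Qbar c1 c2 k eS \<theta> (d1' x \<bullet> d3 x) (d2' x \<bullet> d3 x))
            \<le> norm (C + C * (norm (d1' x))\<^sup>2 + C * (norm (d2' x))\<^sup>2)" by simp
      qed
    qed
  qed
qed

lemma JS_facts:
  assumes c: "c1 > 0" "c2 > 0" "k > 0" "eS \<ge> 0" and l: "l > 0"
    and adm: "admissible l d1 d2 d3 d1' d2' d3'"
  shows "JS c1 c2 k eS \<theta> l d1' d2' d3 \<ge> l * eS"
    and "JS c1 c2 k eS \<theta> l d1' d2' d3 = l * eS \<longleftrightarrow>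
                 (AE x in lebesgue. x \<in> intI l \<longrightarrow>
                    d1' x \<bullet> d3 x = k / 2 * (- 1 - cos (2 * \<theta>))
                    \<and> d2' x \<bullet> d3 x = k / 2 * sin (2 * \<theta>))"
proof -
  define I where "I = intI l"
  define h where "h x = Qbar c1 c2 k eS \<theta> (d1' x \<bullet> d3 x) (d2' x \<bullet> d3 x)" for x
  have hI: "set_integrable lebesgue I h" unfolding h_def I_def by (rule Qbar_integrable[OF c l adm])
  have cI: "set_integrable lebesgue I (\<lambda>x. eS)" unfolding I_def by (rule set_int_const[OF l])
  have dI: "set_integrable lebesgue I (\<lambda>x. h x - eS)" using hI cI by (rule set_integral_diff(1))
  have JSe: "JS c1 c2 k eS \<theta> l d1' d2' d3 - l * eS = (LINT x:I|lebesgue. h x - eS)"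
  proof -
    have "(LINT x:I|lebesgue. h x - eS) = (LINT x:I|lebesgue. h x) - (LINT x:I|lebesgue. eS)"
      using hI cI by (rule set_integral_diff(2))
    also have "(LINT x:I|lebesgue. eS) = l * eS"
      using measI[OF l] unfolding I_def by (simp add: set_integral_const)
    finally show ?thesis unfolding JS_def h_def I_def by simp
  qed
  define F where "F x = indicator I x *\<^sub>R (h x - eS)" for x
  have Fint: "integrable lebesgue F" using dI unfolding set_integrable_def F_def .
  have hge: "h x - eS \<ge> 0" for x
  proof -
    have "0 \<le> c1 * ((d1' x \<bullet> d3 x + k * (cos \<theta>)\<^sup>2)\<^sup>2 + 2 * (d2' x \<bullet> d3 x - k * sin \<theta> * cos \<theta>)\<^sup>2)"
      using c by simp
    then show ?thesis unfolding h_def using Qbar_lb[OF c(1,2), where k=k and eS=eS and \<theta>=\<theta>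
      and \<alpha>="d1' x \<bullet> d3 x" and \<beta>="d2' x \<bullet> d3 x"] by linarith
  qed
  have F0: "F x \<ge> 0" for x unfolding F_def using hge[of x] by (simp add: indicator_def)
  have LF: "(LINT x:I|lebesgue. h x - eS) = integral\<^sup>L lebesgue F"
    unfolding set_lebesgue_integral_def F_def ..
  show "JS c1 c2 k eS \<theta> l d1' d2' d3 \<ge> l * eS"
  proof -
    have "integral\<^sup>L lebesgue F \<ge> 0" by (rule Bochner_Integration.integral_nonneg) (simp add: F0)
    then show ?thesis using JSe LF by linarith
  qed
  have "JS c1 c2 k eS \<theta> l d1' d2' d3 = l * eS \<longleftrightarrow> integral\<^sup>L lebesgue F = 0"
    using JSe LF by linarith
  also have "\<dots> \<longleftrightarrow> (AE x in lebesgue. F x = 0)"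
    using Fint F0 by (intro integral_nonneg_eq_0_iff_AE) auto
  also have "\<dots> \<longleftrightarrow> (AE x in lebesgue. x \<in> intI l \<longrightarrow>
                    d1' x \<bullet> d3 x = k / 2 * (- 1 - cos (2 * \<theta>))
                    \<and> d2' x \<bullet> d3 x = k / 2 * sin (2 * \<theta>))"
  proof (rule AE_cong)
    fix x
    show "F x = 0 \<longleftrightarrow> (x \<in> intI l \<longrightarrow>
                    d1' x \<bullet> d3 x = k / 2 * (- 1 - cos (2 * \<theta>))
                    \<and> d2' x \<bullet> d3 x = k / 2 * sin (2 * \<theta>))"
      unfolding F_def I_def h_def using Qbar_char[OF c(1,2), where k=k and eS=eS and \<theta>=\<theta>
      and \<alpha>="d1' x \<bullet> d3 x" and \<beta>="d2' x \<bullet> d3 x"] by (auto simp: indicator_def)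
  qed
  finally show "JS c1 c2 k eS \<theta> l d1' d2' d3 = l * eS \<longleftrightarrow>
                 (AE x in lebesgue. x \<in> intI l \<longrightarrow>
                    d1' x \<bullet> d3 x = k / 2 * (- 1 - cos (2 * \<theta>))
                    \<and> d2' x \<bullet> d3 x = k / 2 * sin (2 * \<theta>))" .
qed

lemma cont_set_int_Icc:
  fixes g :: "real \<Rightarrow> 'a::euclidean_space"
  assumes "continuous_on UNIV g"
  shows "set_integrable lebesgue {a..b} g"
  using absolutely_integrable_continuous_real[of a b g] assms by (auto intro: continuous_on_subset)

lemma cont_set_int_compact:
  fixes g :: "real \<Rightarrow> 'a::euclidean_space"
  assumes "continuous_on UNIV g" "compact K"
  shows "set_integrable lebesgue K g"
proof -
  obtain a where "K \<subseteq> cbox (-a) a" using bounded_subset_cbox_symmetric compact_imp_bounded assms(2) by blast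
  then have K: "K \<subseteq> {-a..a}" by simp
  show ?thesis
    by (rule set_integrable_subset[OF cont_set_int_Icc[OF assms(1)] _ K])
       (simp add: assms(2) borel_compact)
qed

lemma cont_set_int_Ioo:
  fixes g :: "real \<Rightarrow> 'a::euclidean_space"
  assumes "continuous_on UNIV g"
  shows "set_integrable lebesgue {a<..<b} g"
  by (rule set_integrable_subset[OF cont_set_int_Icc[OF assms, of a b]]) auto

lemma cont_LINT:
  fixes g :: "real \<Rightarrow> 'a::euclidean_space"
  assumes "continuous_on UNIV g"
  shows "(LINT x:{a<..<b}|lebesgue. g x) = integral {a..b} g"
  using set_lebesgue_integral_eq_integral(2)[OF cont_set_int_Ioo[OF assms]]
  by (simp add: integral_open_interval_real)

lemma cont_meas:
  fixes g :: "real \<Rightarrow> 'a::euclidean_space"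
  assumes "continuous_on UNIV g"
  shows "g \<in> borel_measurable lebesgue"
  using continuous_imp_measurable_on_sets_lebesgue[OF assms] by (simp add: lebesgue_on_UNIV_eq)

lemma ibp:
  fixes u u' :: "real \<Rightarrow> 'a::euclidean_space"
  assumes l: "l > 0" and du: "\<And>x. (u has_vector_derivative u' x) (at x)"
    and cu': "continuous_on UNIV u'" and cu: "continuous_on UNIV u"
    and tf: "test_fun (intI l) \<phi>"
  shows "(LINT x:intI l|lebesgue. deriv \<phi> x *\<^sub>R u x) = - (LINT x:intI l|lebesgue. \<phi> x *\<^sub>R u' x)"
proof -
    from tf obtain D where D0: "D 0 = \<phi>" and DD: "\<And>n x. (D n has_real_derivative D (Suc n) x) (at x)"
      unfolding test_fun_def smooth_fun_def by blast
    have dphi: "(\<phi> has_real_derivative D 1 x) (at x)" for x using DD[of 0 x] D0 by simp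
    have deriv_eq: "deriv \<phi> x = D 1 x" for x using dphi by (rule DERIV_imp_deriv)
    have cphi: "continuous_on UNIV \<phi>"
    proof (rule continuous_at_imp_continuous_on, rule ballI)
      fix x show "isCont \<phi> x" by (rule DERIV_isCont[OF dphi])
    qed
    have cD1: "continuous_on UNIV (D 1)"
    proof (rule continuous_at_imp_continuous_on, rule ballI)
      fix x show "isCont (D 1) x" by (rule DERIV_isCont[OF DD])
    qed
    define a b where "a = - l / 2" and "b = l / 2"
    have ab: "a \<le> b" using l unfolding a_def b_def by simp
    have supp: "closure {x. \<phi> x \<noteq> 0} \<subseteq> {a<..<b}" using tf unfolding test_fun_def intI_def a_def b_def by simp
    have pa: "\<phi> a = 0"
    proof (rule ccontr)
      assume "\<phi> a \<noteq> 0" then have "a \<in> {x. \<phi> x \<noteq> 0}" by simp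
      then have "a \<in> {a<..<b}" using supp closure_subset by (meson subsetD)
      then show False by simp
    qed
    have pb: "\<phi> b = 0"
    proof (rule ccontr)
      assume "\<phi> b \<noteq> 0" then have "b \<in> {x. \<phi> x \<noteq> 0}" by simp
      then have "b \<in> {a<..<b}" using supp closure_subset by (meson subsetD)
      then show False by simp
    qed
    have ftc: "((\<lambda>x. \<phi> x *\<^sub>R u' x + D 1 x *\<^sub>R u x) has_integral (\<phi> b *\<^sub>R u b - \<phi> a *\<^sub>R u a)) {a..b}"
    proof (rule fundamental_theorem_of_calculus[OF ab])
      fix x assume "x \<in> {a..b}"
      show "((\<lambda>x. \<phi> x *\<^sub>R u x) has_vector_derivative \<phi> x *\<^sub>R u' x + D 1 x *\<^sub>R u x) (at x within {a..b})"
        by (rule has_vector_derivative_scaleR[OF DERIV_subset[OF dphi] has_vector_derivative_at_within[OF du]]) simp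
    qed
    have c1: "continuous_on UNIV (\<lambda>x. \<phi> x *\<^sub>R u' x)" by (rule continuous_on_scaleR[OF cphi cu'])
    have c2: "continuous_on UNIV (\<lambda>x. D 1 x *\<^sub>R u x)" by (rule continuous_on_scaleR[OF cD1 cu])
    have i1: "(\<lambda>x. \<phi> x *\<^sub>R u' x) integrable_on {a..b}" by (rule integrable_continuous_real, rule continuous_on_subset[OF c1]) simp
    have i2: "(\<lambda>x. D 1 x *\<^sub>R u x) integrable_on {a..b}" by (rule integrable_continuous_real, rule continuous_on_subset[OF c2]) simp
    have "integral {a..b} (\<lambda>x. \<phi> x *\<^sub>R u' x + D 1 x *\<^sub>R u x) = 0"
      using ftc pa pb by (simp add: integral_unique)
    then have "integral {a..b} (\<lambda>x. \<phi> x *\<^sub>R u' x) + integral {a..b} (\<lambda>x. D 1 x *\<^sub>R u x) = 0"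
      using integral_add[OF i1 i2] by simp
    moreover have "(LINT x:intI l|lebesgue. deriv \<phi> x *\<^sub>R u x) = integral {a..b} (\<lambda>x. D 1 x *\<^sub>R u x)"
      unfolding deriv_eq intI_def a_def b_def by (rule cont_LINT[OF c2])
    moreover have "(LINT x:intI l|lebesgue. \<phi> x *\<^sub>R u' x) = integral {a..b} (\<lambda>x. \<phi> x *\<^sub>R u' x)"
      unfolding intI_def a_def b_def by (rule cont_LINT[OF c1])
    ultimately show "(LINT x:intI l|lebesgue. deriv \<phi> x *\<^sub>R u x) = - (LINT x:intI l|lebesgue. \<phi> x *\<^sub>R u' x)"
      by (simp add: eq_neg_iff_add_eq_0 add.commute)
qed

lemma W12_smooth:
  fixes u u' :: "real \<Rightarrow> 'a::euclidean_space"
  assumes l: "l > 0" and du: "\<And>x. (u has_vector_derivative u' x) (at x)"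
    and cu': "continuous_on UNIV u'"
  shows "W12_with_deriv (intI l) u u'"
proof -
  have cu: "continuous_on UNIV u"
  proof (rule continuous_at_imp_continuous_on, rule ballI)
    fix x show "isCont u x" by (rule has_vector_derivative_continuous[OF du])
  qed
  have L2u: "L2_on (intI l) g" if cg: "continuous_on UNIV g" for g :: "real \<Rightarrow> 'a"
  proof -
    have "set_borel_measurable lebesgue (intI l) g"
      unfolding set_borel_measurable_def
      by (rule borel_measurable_scaleR[OF borel_measurable_indicator[OF measI(3)[OF l]] cont_meas[OF cg]])
    moreover have "set_integrable lebesgue (intI l) (\<lambda>x. (norm (g x))\<^sup>2)"
      unfolding intI_def by (rule cont_set_int_Ioo) (intro continuous_intros cg)
    ultimately show ?thesis unfolding L2_on_def by simp
  qed
  have wd: "has_weak_deriv_on (intI l) u u'"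
    unfolding has_weak_deriv_on_def
  proof (intro conjI allI impI)
    fix K :: "real set" assume "compact K \<and> K \<subseteq> intI l"
    then have "compact K" by simp
    then show "set_integrable lebesgue K u" "set_integrable lebesgue K u'"
      by (rule cont_set_int_compact[OF cu], rule cont_set_int_compact[OF cu'])
  next
    fix \<phi> assume "test_fun (intI l) \<phi>"
    then show "(LINT x:intI l|lebesgue. deriv \<phi> x *\<^sub>R u x) = - (LINT x:intI l|lebesgue. \<phi> x *\<^sub>R u' x)"
      by (rule ibp[OF l du cu' cu])
  qed
  show ?thesis unfolding W12_with_deriv_def using L2u[OF cu] L2u[OF cu'] wd by simp
qed

definition V :: "real \<Rightarrow> real \<Rightarrow> real \<Rightarrow> real^3" where
  "V a b c = a *\<^sub>R axis 1 1 + b *\<^sub>R axis 2 1 + c *\<^sub>R axis 3 1"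
lemma V_nth[simp]: "V a b c $ 1 = a" "V a b c $ 2 = b" "V a b c $ 3 = c"
  by (simp_all add: V_def axis_def)
lemma V_inner[simp]: "V a b c \<bullet> V a' b' c' = a * a' + b * b' + c * c'"
  by (simp add: inner_vec_def sum_3)
lemma V_deriv:
  assumes "(f has_real_derivative f') (at x)" "(g has_real_derivative g') (at x)" "(h has_real_derivative h') (at x)"
  shows "((\<lambda>x. V (f x) (g x) (h x)) has_vector_derivative V f' g' h') (at x)"
  unfolding V_def using assms
  by (auto intro!: derivative_eq_intros simp: has_real_derivative_iff_has_vector_derivative)
lemma V_cont: assumes "continuous_on S f" "continuous_on S g" "continuous_on S h"
  shows "continuous_on S (\<lambda>x. V (f x) (g x) (h x))"
  unfolding V_def by (intro continuous_intros assms)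
definition "fr1 s c w x = V (cos (w * x) + s\<^sup>2 * (1 - cos (w * x))) (s * c * (1 - cos (w * x))) (- c * sin (w * x))"
definition "fr2 s c w x = V (s * c * (1 - cos (w * x))) (cos (w * x) + c\<^sup>2 * (1 - cos (w * x))) (s * sin (w * x))"
definition "fr3 s c w x = V (c * sin (w * x)) (- s * sin (w * x)) (cos (w * x))"
definition "fr1' s c w x = V (- w * sin (w * x) + s\<^sup>2 * w * sin (w * x)) (s * c * w * sin (w * x)) (- c * w * cos (w * x))"
definition "fr2' s c w x = V (s * c * w * sin (w * x)) (- w * sin (w * x) + c\<^sup>2 * w * sin (w * x)) (s * w * cos (w * x))"
definition "fr3' s c w x = V (c * w * cos (w * x)) (- s * w * cos (w * x)) (- w * sin (w * x))"

lemma fr_deriv: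
  "(fr1 s c w has_vector_derivative fr1' s c w x) (at x)"
  "(fr2 s c w has_vector_derivative fr2' s c w x) (at x)"
  "(fr3 s c w has_vector_derivative fr3' s c w x) (at x)"
  unfolding fr1_def fr2_def fr3_def fr1'_def fr2'_def fr3'_def
  by (rule V_deriv; auto intro!: derivative_eq_intros simp: algebra_simps)+

lemma fr_cont:
  "continuous_on UNIV (fr1' s c w)" "continuous_on UNIV (fr2' s c w)" "continuous_on UNIV (fr3' s c w)"
  unfolding fr1'_def fr2'_def fr3'_def
  by (intro V_cont continuous_intros)+

lemma fr_inner:
  assumes sc: "s\<^sup>2 + c\<^sup>2 = 1"
  shows "fr1' s c w x \<bullet> fr2 s c w x = 0" "fr1' s c w x \<bullet> fr3 s c w x = - w * c" "fr2' s c w x \<bullet> fr3 s c w x = w * s"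
proof -
  have SC: "(sin (w * x))\<^sup>2 + (cos (w * x))\<^sup>2 = 1" by simp
  show "fr1' s c w x \<bullet> fr2 s c w x = 0" unfolding fr1'_def fr2_def V_inner using sc SC by algebra
  show "fr1' s c w x \<bullet> fr3 s c w x = - w * c" unfolding fr1'_def fr3_def V_inner using sc SC by algebra
  show "fr2' s c w x \<bullet> fr3 s c w x = w * s" unfolding fr2'_def fr3_def V_inner using sc SC by algebra
qed

lemma frame_orth:
  assumes "a \<bullet> a = 1" "b \<bullet> b = 1" "c \<bullet> c = 1" "a \<bullet> b = 0" "a \<bullet> c = 0" "b \<bullet> c = 0"
  shows "orthogonal_matrix (frame a b c)"
  unfolding orthogonal_matrix
  using assms by (simp add: vec_eq_iff forall_3 matrix_matrix_mult_def transpose_def frame_def mat_def sum_3 inner_vec_def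
      mult.commute)

lemma fr_rot:
  assumes sc: "s\<^sup>2 + c\<^sup>2 = 1"
  shows "rotation_matrix (frame (fr1 s c w x) (fr2 s c w x) (fr3 s c w x))"
proof -
  have SC: "(sin (w * x))\<^sup>2 + (cos (w * x))\<^sup>2 = 1" by simp
  have "orthogonal_matrix (frame (fr1 s c w x) (fr2 s c w x) (fr3 s c w x))"
  proof (rule frame_orth)
    show "fr1 s c w x \<bullet> fr1 s c w x = 1" unfolding fr1_def V_inner using sc SC by algebra
    show "fr2 s c w x \<bullet> fr2 s c w x = 1" unfolding fr2_def V_inner using sc SC by algebra
    show "fr3 s c w x \<bullet> fr3 s c w x = 1" unfolding fr3_def V_inner using sc SC by algebra
    show "fr1 s c w x \<bullet> fr2 s c w x = 0" unfolding fr1_def fr2_def V_inner using sc SC by algebra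
    show "fr1 s c w x \<bullet> fr3 s c w x = 0" unfolding fr1_def fr3_def V_inner by (simp add: power2_eq_square algebra_simps)
    show "fr2 s c w x \<bullet> fr3 s c w x = 0" unfolding fr2_def fr3_def V_inner by (simp add: power2_eq_square algebra_simps)
  qed
  moreover have "det (frame (fr1 s c w x) (fr2 s c w x) (fr3 s c w x)) = 1"
    unfolding det_3 by (simp add: frame_def fr1_def fr2_def fr3_def; use sc SC in algebra)
  ultimately show ?thesis unfolding rotation_matrix_def by simp
qed


theorem mainTheorem11:
  fixes c1 c2 k eS \<theta> l :: real
  assumes "c1 > 0" and "c2 > 0" and "k > 0" and "eS \<ge> 0"
    and "0 \<le> \<theta>" and "\<theta> < pi" and "l > 0"
  shows "(\<exists>d1 d2 d3 d1' d2' d3'. admissible l d1 d2 d3 d1' d2' d3'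
            \<and> JS c1 c2 k eS \<theta> l d1' d2' d3 = l * eS)
       \<and> (\<forall>d1 d2 d3 d1' d2' d3'. admissible l d1 d2 d3 d1' d2' d3'
            \<longrightarrow> JS c1 c2 k eS \<theta> l d1' d2' d3 \<ge> l * eS)
       \<and> (\<forall>d1 d2 d3 d1' d2' d3'. admissible l d1 d2 d3 d1' d2' d3'
            \<longrightarrow> (JS c1 c2 k eS \<theta> l d1' d2' d3 = l * eS \<longleftrightarrow>
                 (AE x in lebesgue. x \<in> intI l \<longrightarrow>
                    d1' x \<bullet> d3 x = k / 2 * (- 1 - cos (2 * \<theta>))
                    \<and> d2' x \<bullet> d3 x = k / 2 * sin (2 * \<theta>))))"
proof (intro conjI allI impI)
  note c = assms(1-4) and l = assms(7)
  define s where "s = sin \<theta>"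
  define co where "co = cos \<theta>"
  define w where "w = k * cos \<theta>"
  have sc: "s\<^sup>2 + co\<^sup>2 = 1" unfolding s_def co_def by simp
  have adm: "admissible l (fr1 s co w) (fr2 s co w) (fr3 s co w) (fr1' s co w) (fr2' s co w) (fr3' s co w)"
    unfolding admissible_def
  proof (intro conjI)
    show "W12_with_deriv (intI l) (fr1 s co w) (fr1' s co w)" by (rule W12_smooth[OF l fr_deriv(1) fr_cont(1)])
    show "W12_with_deriv (intI l) (fr2 s co w) (fr2' s co w)" by (rule W12_smooth[OF l fr_deriv(2) fr_cont(2)])
    show "W12_with_deriv (intI l) (fr3 s co w) (fr3' s co w)" by (rule W12_smooth[OF l fr_deriv(3) fr_cont(3)])
    show "AE x in lebesgue. x \<in> intI l \<longrightarrow> rotation_matrix (frame (fr1 s co w x) (fr2 s co w x) (fr3 s co w x))"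
      by (rule AE_I2) (simp add: fr_rot[OF sc])
    show "AE x in lebesgue. x \<in> intI l \<longrightarrow> fr1' s co w x \<bullet> fr2 s co w x = 0"
      by (rule AE_I2) (simp add: fr_inner(1)[OF sc])
  qed
  have e1: "k / 2 * (- 1 - cos (2 * \<theta>)) = - w * co" unfolding w_def co_def
    by (subst cos_double_cos) (simp add: algebra_simps power2_eq_square)
  have e2: "k / 2 * sin (2 * \<theta>) = w * s" unfolding w_def s_def by (simp add: sin_double)
  have "JS c1 c2 k eS \<theta> l (fr1' s co w) (fr2' s co w) (fr3 s co w) = l * eS"
    unfolding JS_facts(2)[OF c l adm] e1 e2
    by (rule AE_I2) (simp add: fr_inner[OF sc])
  then show "\<exists>d1 d2 d3 d1' d2' d3'. admissible l d1 d2 d3 d1' d2' d3'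
            \<and> JS c1 c2 k eS \<theta> l d1' d2' d3 = l * eS"
    using adm by blast
next
  fix d1 d2 d3 d1' d2' d3'
  assume "admissible l d1 d2 d3 d1' d2' d3'"
  then show "JS c1 c2 k eS \<theta> l d1' d2' d3 \<ge> l * eS"
    using JS_facts(1) assms by blast
next
  fix d1 d2 d3 d1' d2' d3'
  assume "admissible l d1 d2 d3 d1' d2' d3'"
  then show "JS c1 c2 k eS \<theta> l d1' d2' d3 = l * eS \<longleftrightarrow>
                 (AE x in lebesgue. x \<in> intI l \<longrightarrow>
                    d1' x \<bullet> d3 x = k / 2 * (- 1 - cos (2 * \<theta>))
                    \<and> d2' x \<bullet> d3 x = k / 2 * sin (2 * \<theta>))"
    using JS_facts(2) assms by blast
qed

end
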